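(* Let $L,k$ be natural numbers and let $G=(V,E)$ be a simple, undirected, connected graph whose vertex set can be covered by $L$ balls of radius $k$ (i.e. there are $u_1,\dots,u_L\in V$ with every vertex at distance at most $k$ from some $u_j$). Then the cat can localise the mouse up to distance $4L+k$ in $G$ by time $2L$.
   Context: The Cat and Mouse game on $G$ proceeds in time steps $i=1,2,\dots$. The mouse occupies vertices $m_1,m_2,\dots$, where for $i\ge2$, $m_i$ equals $m_{i-1}$ or is a neighbour of $m_{i-1}$. At time $i$ the cat tests an arbitrary vertex $c_i$; for $i\ge2$ it is told $b_i=1$ if $d(c_i,m_i)\le d(c_{i-1},m_{i-1})$ and $b_i=0$ otherwise ($d$ = graph distance). A cat strategy is $(c_1,c_2,f)$ with $f:\bigcup_{i\in\mathbb N}\{0,1\}^i\to V(G)$ and $c_i=f(b_2,\dots,b_{i-1})$ for $i\ge3$ (deterministic, fixed in advance). $M_i$ is the set of vertices $v$ for which there exist $\tilde m_1,\dots,\tilde m_i$ with $\tilde m_i=v$, each $\tilde m_j$ in the closed neighbourhood of $\tilde m_{j-1}$, and for each $2\le j\le i$: $d(c_j,\tilde m_j)\le d(c_{j-1},\tilde m_{j-1})$ iff $b_j=1$. $\mathrm{rad}_G(W)=\min_{v\in V(G)}\max_{w\in W}d(v,w)$. The cat can localise the mouse up to distance $d$ by time $t$ if there is a cat strategy such that, for every admissible mouse sequence, some $i\le t$ satisfies $\mathrm{rad}_G(M_i)\le d$. *)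

theory Defs
  imports Main "HOL-Library.Extended_Nat"
begin

definition simple_graph :: "'a set \<Rightarrow> ('a \<Rightarrow> 'a \<Rightarrow> bool) \<Rightarrow> bool" where
  "simple_graph V E \<longleftrightarrow>
     (\<forall>x y. E x y \<longrightarrow> x \<in> V \<and> y \<in> V) \<and>
     (\<forall>x y. E x y \<longrightarrow> E y x) \<and>
     (\<forall>x. \<not> E x x)"

inductive walk :: "('a \<Rightarrow> 'a \<Rightarrow> bool) \<Rightarrow> nat \<Rightarrow> 'a \<Rightarrow> 'a \<Rightarrow> bool" for E where
  walk_refl: "walk E 0 u u"
| walk_step: "E u w \<Longrightarrow> walk E n w v \<Longrightarrow> walk E (Suc n) u v"

definition connected_graph :: "'a set \<Rightarrow> ('a \<Rightarrow> 'a \<Rightarrow> bool) \<Rightarrow> bool" where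
  "connected_graph V E \<longleftrightarrow> V \<noteq> {} \<and> (\<forall>u\<in>V. \<forall>v\<in>V. \<exists>n. walk E n u v)"

text \<open>Graph distance (meaningful in a connected graph).\<close>
definition gdist :: "('a \<Rightarrow> 'a \<Rightarrow> bool) \<Rightarrow> 'a \<Rightarrow> 'a \<Rightarrow> nat" where
  "gdist E u v = (LEAST n. walk E n u v)"

text \<open>rad_G(W) = min over v in V of max over w in W of d(v,w) (as inf/sup in enat,
so that it is well defined also for infinite W).\<close>
definition grad :: "'a set \<Rightarrow> ('a \<Rightarrow> 'a \<Rightarrow> bool) \<Rightarrow> 'a set \<Rightarrow> enat" where
  "grad V E W = (INF v\<in>V. SUP w\<in>W. enat (gdist E v w))"

text \<open>Admissible mouse sequences m_1, m_2, ... (index 0 unused).\<close>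
definition mouse_seq :: "'a set \<Rightarrow> ('a \<Rightarrow> 'a \<Rightarrow> bool) \<Rightarrow> (nat \<Rightarrow> 'a) \<Rightarrow> bool" where
  "mouse_seq V E m \<longleftrightarrow>
     (\<forall>i\<ge>1. m i \<in> V) \<and> (\<forall>i\<ge>2. m i = m (i - 1) \<or> E (m (i - 1)) (m i))"

text \<open>Cat position at time i, given the answers b_2,...,b_{i-1} received so far.\<close>
definition cat_pos :: "'a \<Rightarrow> 'a \<Rightarrow> (bool list \<Rightarrow> 'a) \<Rightarrow> nat \<Rightarrow> bool list \<Rightarrow> 'a" where
  "cat_pos c1 c2 f i h = (if i \<le> 1 then c1 else if i = 2 then c2 else f h)"

text \<open>hist n = [b_2, ..., b_n] (empty for n \<le> 1), for the strategy (c1,c2,f) played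
against the mouse sequence m.\<close>
fun hist :: "('a \<Rightarrow> 'a \<Rightarrow> bool) \<Rightarrow> 'a \<Rightarrow> 'a \<Rightarrow> (bool list \<Rightarrow> 'a) \<Rightarrow> (nat \<Rightarrow> 'a) \<Rightarrow> nat \<Rightarrow> bool list" where
  "hist E c1 c2 f m 0 = []"
| "hist E c1 c2 f m (Suc 0) = []"
| "hist E c1 c2 f m (Suc (Suc k)) =
     hist E c1 c2 f m (Suc k) @
       [gdist E (cat_pos c1 c2 f (Suc (Suc k)) (hist E c1 c2 f m (Suc k))) (m (Suc (Suc k)))
        \<le> gdist E (cat_pos c1 c2 f (Suc k) (hist E c1 c2 f m k)) (m (Suc k))]"

definition cat :: "('a \<Rightarrow> 'a \<Rightarrow> bool) \<Rightarrow> 'a \<Rightarrow> 'a \<Rightarrow> (bool list \<Rightarrow> 'a) \<Rightarrow> (nat \<Rightarrow> 'a) \<Rightarrow> nat \<Rightarrow> 'a" where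
  "cat E c1 c2 f m i = cat_pos c1 c2 f i (hist E c1 c2 f m (i - 1))"

definition answer :: "('a \<Rightarrow> 'a \<Rightarrow> bool) \<Rightarrow> 'a \<Rightarrow> 'a \<Rightarrow> (bool list \<Rightarrow> 'a) \<Rightarrow> (nat \<Rightarrow> 'a) \<Rightarrow> nat \<Rightarrow> bool" where
  "answer E c1 c2 f m i =
     (gdist E (cat E c1 c2 f m i) (m i) \<le> gdist E (cat E c1 c2 f m (i - 1)) (m (i - 1)))"

text \<open>M_i: the set of possible mouse positions at time i consistent with the answers.\<close>
definition possible_set :: "'a set \<Rightarrow> ('a \<Rightarrow> 'a \<Rightarrow> bool) \<Rightarrow> 'a \<Rightarrow> 'a \<Rightarrow> (bool list \<Rightarrow> 'a)
    \<Rightarrow> (nat \<Rightarrow> 'a) \<Rightarrow> nat \<Rightarrow> 'a set" where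
  "possible_set V E c1 c2 f m i =
     {v. \<exists>mt :: nat \<Rightarrow> 'a. mt i = v \<and> (\<forall>j\<in>{1..i}. mt j \<in> V) \<and>
        (\<forall>j\<in>{2..i}. mt j = mt (j - 1) \<or> E (mt (j - 1)) (mt j)) \<and>
        (\<forall>j\<in>{2..i}. (gdist E (cat E c1 c2 f m j) (mt j)
                        \<le> gdist E (cat E c1 c2 f m (j - 1)) (mt (j - 1)))
                     \<longleftrightarrow> answer E c1 c2 f m j)}"

definition can_localise :: "'a set \<Rightarrow> ('a \<Rightarrow> 'a \<Rightarrow> bool) \<Rightarrow> nat \<Rightarrow> nat \<Rightarrow> bool" where
  "can_localise V E d t \<longleftrightarrow>
     (\<exists>c1 c2 f. c1 \<in> V \<and> c2 \<in> V \<and> (\<forall>h. f h \<in> V) \<and>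
        (\<forall>m. mouse_seq V E m \<longrightarrow>
           (\<exists>i\<in>{1..t}. grad V E (possible_set V E c1 c2 f m i) \<le> enat d)))"

end

theory Submission
  imports Defs
begin

fun S :: "(nat \<Rightarrow> 'a) \<Rightarrow> nat \<Rightarrow> (nat \<Rightarrow> bool) \<Rightarrow> 'a" where
  "S u 0 b = u 1"
| "S u (Suc 0) b = u 1"
| "S u (Suc (Suc n)) b = (if even n then u (n div 2 + 2)
     else if b (n + 1) then u ((n + 3) div 2) else S u n b)"

lemma S_range: "S u i b \<in> range u"
  by (induction u i b rule: S.induct) auto

lemma S_agree: "(\<forall>j. 2 \<le> j \<and> j < i \<longrightarrow> b1 j = b2 j) \<Longrightarrow> S u i b1 = S u i b2"
proof (induction u i b1 rule: S.induct)
  case (3 u n b)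
  show ?case
  proof (cases "even n")
    case False
    then have "n \<ge> 1" by presburger
    then have "b (n+1) = b2 (n+1)" using 3(2) by auto
    moreover have "\<not> b (n+1) \<Longrightarrow> S u n b = S u n b2"
      using 3(1)[OF False] 3(2) by auto
    ultimately show ?thesis using False by auto
  qed simp
qed auto

lemma hist_props:
  "length (hist E c1 c2 f m (Suc k)) = k \<and>
   (\<forall>j. 2 \<le> j \<and> j \<le> Suc k \<longrightarrow> hist E c1 c2 f m (Suc k) ! (j - 2) = answer E c1 c2 f m j)"
proof (induction k)
  case 0
  then show ?case by auto
next
  case (Suc k)
  have A: "answer E c1 c2 f m (Suc (Suc k)) =
     (gdist E (cat_pos c1 c2 f (Suc (Suc k)) (hist E c1 c2 f m (Suc k))) (m (Suc (Suc k)))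
        \<le> gdist E (cat_pos c1 c2 f (Suc k) (hist E c1 c2 f m k)) (m (Suc k)))"
    unfolding answer_def cat_def by simp
  show ?case
  proof (intro conjI allI impI)
    show "length (hist E c1 c2 f m (Suc (Suc k))) = Suc k" using Suc by simp
  next
    fix j assume j: "2 \<le> j \<and> j \<le> Suc (Suc k)"
    show "hist E c1 c2 f m (Suc (Suc k)) ! (j - 2) = answer E c1 c2 f m j"
    proof (cases "j = Suc (Suc k)")
      case True
      then show ?thesis using Suc A by (simp add: nth_append)
    next
      case False
      then have "j - 2 < k" using j by auto
      then show ?thesis using Suc j False by (simp add: nth_append)
    qed
  qed
qed

lemma walk_snoc: "walk E n x y \<Longrightarrow> E y z \<Longrightarrow> walk E (Suc n) x z"
  by (induction rule: walk.induct) (auto intro: walk.intros)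

lemma gdist_step:
  assumes "connected_graph V E" "x \<in> V" "y \<in> V" "z = y \<or> E y z"
  shows "gdist E x z \<le> gdist E x y + 1"
proof (cases "z = y")
  case True then show ?thesis by simp
next
  case False
  then have e: "E y z" using assms by auto
  obtain n where "walk E n x y" using assms unfolding connected_graph_def by blast
  then have "walk E (gdist E x y) x y" unfolding gdist_def by (rule LeastI)
  then have "walk E (Suc (gdist E x y)) x z" using e walk_snoc by fast
  then show ?thesis unfolding gdist_def by (simp add: Least_le)
qed

lemma key:
  fixes d :: "'a \<Rightarrow> 'a \<Rightarrow> nat" and c mt uu :: "nat \<Rightarrow> 'a" and ans :: "nat \<Rightarrow> bool"
  assumes step: "\<And>x t. x \<in> V \<Longrightarrow> 2 \<le> t \<Longrightarrow> t \<le> 2*L-1 \<Longrightarrow> d x (mt t) \<le> d x (mt (t-1)) + 1"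
    and cV: "\<And>t. c t \<in> V"
    and uuV: "\<And>j. uu j \<in> V"
    and ceven: "\<And>j. c (2*j) = uu (j+1)"
    and codd: "\<And>j. j \<ge> 1 \<Longrightarrow> c (2*j+1) = (if ans (2*j) then c (2*j) else c (2*j - 1))"
    and eqv: "\<And>t. 2 \<le> t \<Longrightarrow> t \<le> 2*L-1 \<Longrightarrow> (d (c t) (mt t) \<le> d (c (t-1)) (mt (t-1))) = ans t"
    and c1: "c 1 = uu 1"
    and js: "d (uu js) (mt 1) \<le> k" "1 \<le> js" "js \<le> L"
  shows "d (c (2*L-1)) (mt (2*L-1)) \<le> k + 2*L - 2"
proof -
  have U: "\<forall>t. 1 \<le> t \<and> t \<le> 2*L-1 \<longrightarrow> d (uu js) (mt t) \<le> k + t - 1"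
  proof (intro allI)
    fix t show "1 \<le> t \<and> t \<le> 2*L-1 \<longrightarrow> d (uu js) (mt t) \<le> k + t - 1"
    proof (induction t)
      case (Suc t)
      show ?case
      proof (cases "t = 0")
        case True then show ?thesis using js by simp
      next
        case False
        then show ?thesis using Suc step[of "uu js" "Suc t"] uuV by fastforce
      qed
    qed simp
  qed
  have Q: "\<forall>j. 1 \<le> j \<and> j \<le> L \<and> js \<le> j \<longrightarrow> d (c (2*j-1)) (mt (2*j-1)) \<le> k + 2*j - 2"
  proof (intro allI)
    fix j show "1 \<le> j \<and> j \<le> L \<and> js \<le> j \<longrightarrow> d (c (2*j-1)) (mt (2*j-1)) \<le> k + 2*j - 2"
    proof (induction j)
      case (Suc j)
      show ?case
      proof (cases "j = 0")
        case True then show ?thesis using js c1 by auto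
      next
        case False
        show ?thesis
        proof
          assume h: "1 \<le> Suc j \<and> Suc j \<le> L \<and> js \<le> Suc j"
          define a where "a = d (c (2*j-1)) (mt (2*j-1))"
          define e where "e = d (c (2*j)) (mt (2*j))"
          define a' where "a' = d (c (2*j+1)) (mt (2*j+1))"
          have t1: "2*j+1 \<le> 2*L-1" using h by auto
          have e1: "d (c (2*j)) (mt (2*j+1)) \<le> e + 1"
            using step[of "c (2*j)" "2*j+1"] cV t1 False unfolding e_def by auto
          have a1: "d (c (2*j-1)) (mt (2*j+1)) \<le> a + 2"
            using step[of "c (2*j-1)" "2*j+1"] step[of "c (2*j-1)" "2*j"] cV t1 False
            unfolding a_def by fastforce
          have eq: "(e \<le> a) = ans (2*j)"
            using eqv[of "2*j"] t1 False unfolding a_def e_def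
            by (simp add: Suc_diff_le numeral_2_eq_2)
          have co: "c (2*j+1) = (if ans (2*j) then c (2*j) else c (2*j - 1))"
            using codd False by simp
          have A': "a' \<le> a + 2 \<and> a' \<le> e + 1"
          proof (cases "ans (2*j)")
            case True
            then show ?thesis using co e1 eq unfolding a'_def by auto
          next
            case False
            then show ?thesis using co a1 eq unfolding a'_def by auto
          qed
          have "a' \<le> k + 2*j"
          proof (cases "js \<le> j")
            case True
            then have "a \<le> k + 2*j - 2" using Suc.IH h False unfolding a_def by auto
            then show ?thesis using A' False by linarith
          next
            case False
            then have "js = Suc j" using h by auto
            have "d (uu js) (mt (2*j)) \<le> k + 2*j - 1" using U t1 \<open>j \<noteq> 0\<close> by auto
            then have "e \<le> k + 2*j - 1" using ceven[of j] \<open>js = Suc j\<close> unfolding e_def by simp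
            then show ?thesis using A' \<open>j \<noteq> 0\<close> by linarith
          qed
          moreover have "2 * Suc j - 1 = 2*j+1" by simp
          ultimately show "d (c (2 * Suc j - 1)) (mt (2 * Suc j - 1)) \<le> k + 2 * Suc j - 2"
            unfolding a'_def by simp
        qed
      qed
    qed simp
  qed
  then show ?thesis using js by auto
qed

theorem lemma4p2:
  fixes V :: "'a set" and E :: "'a \<Rightarrow> 'a \<Rightarrow> bool" and L k :: nat
  assumes "simple_graph V E"
    and "connected_graph V E"
    and "\<exists>u :: nat \<Rightarrow> 'a. (\<forall>j\<in>{1..L}. u j \<in> V) \<and>
           (\<forall>v\<in>V. \<exists>j\<in>{1..L}. gdist E (u j) v \<le> k)"
  shows "can_localise V E (4 * L + k) (2 * L)"
proof -
  obtain u :: "nat \<Rightarrow> 'a" where uV: "\<forall>j\<in>{1..L}. u j \<in> V"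
    and cov: "\<forall>v\<in>V. \<exists>j\<in>{1..L}. gdist E (u j) v \<le> k" using assms(3) by blast
  have conn: "connected_graph V E" by fact
  obtain v0 where "v0 \<in> V" using conn unfolding connected_graph_def by blast
  then have L1: "L \<ge> 1" using cov by fastforce
  define uu where "uu = (\<lambda>j. if j \<in> {1..L} then u j else u 1)"
  have uuV: "\<And>j. uu j \<in> V" using uV L1 unfolding uu_def by auto
  define f where "f = (\<lambda>h. S uu (length h + 2) (\<lambda>j. h ! (j - 2)))"
  have fh: "f h = S uu (length h + 2) (\<lambda>j. h ! (j - 2))" for h unfolding f_def by simp
  define c1 where "c1 = uu 1"
  define c2 where "c2 = uu 2"
  have SV: "S uu i b \<in> V" for i b
  proof -
    obtain j where "S uu i b = uu j" using S_range[of uu i b] by blast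
    then show ?thesis using uuV by simp
  qed
  show ?thesis unfolding can_localise_def
  proof (intro exI conjI allI impI)
    show "c1 \<in> V" "c2 \<in> V" using uuV unfolding c1_def c2_def by auto
    fix h show "f h \<in> V" unfolding f_def by (rule SV)
  next
    fix m :: "nat \<Rightarrow> 'a"
    define ans where "ans = answer E c1 c2 f m"
    define c where "c = cat E c1 c2 f m"
    have cS: "c i = S uu i ans" for i
    proof (cases "i \<le> 2")
      case True
      then have "i = 0 \<or> i = 1 \<or> i = 2" by auto
      then show ?thesis unfolding c_def cat_def cat_pos_def c1_def c2_def by (auto simp: numeral_2_eq_2)
    next
      case False
      define k' where "k' = i - 2"
      have k': "i - 1 = Suc k'" "i = k' + 2" using False unfolding k'_def by auto
      note hp = hist_props[of E c1 c2 f m k']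
      have "c i = f (hist E c1 c2 f m (i - 1))" unfolding c_def cat_def cat_pos_def using False by auto
      also have "\<dots> = S uu (length (hist E c1 c2 f m (i - 1)) + 2) (\<lambda>j. hist E c1 c2 f m (i - 1) ! (j - 2))"
        by (rule fh)
      also have "\<dots> = S uu i (\<lambda>j. hist E c1 c2 f m (i - 1) ! (j - 2))"
        using hp k' by (simp del: S.simps)
      also have "\<dots> = S uu i ans"
        by (rule S_agree) (use hp k' in \<open>auto simp: ans_def\<close>)
      finally show ?thesis .
    qed
    have cV: "\<And>t. c t \<in> V" using cS SV by auto
    have ceven: "c (2*j) = uu (j+1)" for j
    proof (cases j)
      case 0 then show ?thesis unfolding cS by simp
    next
      case (Suc j')
      have "S uu (Suc (Suc (2*j'))) ans = uu (j'+2)" by simp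
      moreover have "2*j = Suc (Suc (2*j'))" "j + 1 = j' + 2" using Suc by auto
      ultimately show ?thesis unfolding cS by metis
    qed
    have codd: "c (2*j+1) = (if ans (2*j) then c (2*j) else c (2*j - 1))" if j1: "j \<ge> 1" for j
    proof -
      obtain j' where j': "j = Suc j'" using j1 by (cases j) auto
      have "S uu (Suc (Suc (2*j'+1))) ans = (if ans (2*j'+2) then uu (j'+2) else S uu (2*j'+1) ans)"
        by simp
      moreover have "S uu (Suc (Suc (2*j'))) ans = uu (j'+2)" by simp
      moreover have "2*j+1 = Suc (Suc (2*j'+1))" "2*j - 1 = 2*j'+1" "2*j = Suc (Suc (2*j'))"
        "2*j'+2 = 2*j" using j' by auto
      ultimately show ?thesis unfolding cS by metis
    qed
    have c1': "c 1 = uu 1" unfolding cS by simp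
    let ?I = "2*L - 1"
    let ?M = "possible_set V E c1 c2 f m ?I"
    have bound: "gdist E (c ?I) w \<le> k + 2*L - 2" if w: "w \<in> ?M" for w
    proof -
      obtain mt where mt: "mt ?I = w" "\<forall>j\<in>{1..?I}. mt j \<in> V"
        "\<forall>j\<in>{2..?I}. mt j = mt (j - 1) \<or> E (mt (j - 1)) (mt j)"
        "\<forall>j\<in>{2..?I}. (gdist E (c j) (mt j) \<le> gdist E (c (j - 1)) (mt (j - 1))) = ans j"
        using w unfolding possible_set_def c_def ans_def by blast
      have m1: "mt 1 \<in> V" using mt(2) L1 by auto
      obtain js where js: "js \<in> {1..L}" "gdist E (u js) (mt 1) \<le> k" using cov m1 by blast
      have "uu js = u js" using js unfolding uu_def by auto
      have step: "gdist E x (mt t) \<le> gdist E x (mt (t-1)) + 1"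
        if "x \<in> V" "2 \<le> t" "t \<le> 2*L-1" for x t
      proof -
        have "t - 1 \<in> {1..2*L-1}" using that by auto
        then have "mt (t-1) \<in> V" using mt(2) by blast
        moreover have "mt t = mt (t - 1) \<or> E (mt (t - 1)) (mt t)" using mt(3) that by auto
        ultimately show ?thesis using gdist_step[OF conn that(1), of "mt (t-1)" "mt t"] by auto
      qed
      have "gdist E (c ?I) (mt ?I) \<le> k + 2*L - 2"
        by (rule key[where V=V and uu=uu and ans=ans and js=js])
          (use step cV uuV ceven codd mt(4) c1' js \<open>uu js = u js\<close> in auto)
      then show ?thesis using mt(1) by simp
    qed
    have "grad V E ?M \<le> (SUP w\<in>?M. enat (gdist E (c ?I) w))"
      unfolding grad_def by (rule INF_lower) (rule cV)
    also have "\<dots> \<le> enat (4 * L + k)"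
    proof (rule SUP_least)
      fix w assume "w \<in> ?M"
      then have "gdist E (c ?I) w \<le> k + 2*L - 2" by (rule bound)
      then show "enat (gdist E (c ?I) w) \<le> enat (4 * L + k)" by simp
    qed
    finally show "\<exists>i\<in>{1..2 * L}. grad V E (possible_set V E c1 c2 f m i) \<le> enat (4 * L + k)"
      using L1 by (intro bexI[of _ ?I]) auto
  qed
qed

end
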